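(* Let $I_n$ denote the number of inversion sequences of length $n$ avoiding all of the patterns $102$, $201$, $210$ (with $I_0=1$). Then $$\sum_{n\ge0} I_n z^n=\frac{2-15z+32z^2-16z^3+z(1-2z)(1+2z)\sqrt{1-4z}}{2(1-z)^2(1-2z)(1-4z)}.$$
   Context: An inversion sequence of length $n$ is an integer sequence $(a_1,\dots,a_n)$ with $0\le a_i<i$ for all $i$. A pattern is a sequence $\sigma$ of non-negative integers containing every value from $0$ to $\max(\sigma)$; the reduction of a sequence replaces its smallest values by $0$, the next smallest by $1$, etc. A sequence $a$ contains $\sigma$ if some (not necessarily consecutive) subsequence of $a$ has reduction $\sigma$; otherwise $a$ avoids $\sigma$. Equivalently, these are the inversion sequences with no $i<j<k$ such that $a_i>a_j$, $a_j\ne a_k$ and $a_i\ne a_k$. The square root is the power series with constant term $1$. *)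

theory Defs
  imports "HOL-Library.Sublist" "HOL-Computational_Algebra.Formal_Power_Series"
begin

text \<open>Inversion sequences of length n, as 0-indexed lists: entry at position i
  (i.e. a_(i+1) in the paper) satisfies 0 \<le> a_(i+1) < i+1.\<close>
definition inv_seq :: "nat list \<Rightarrow> bool" where
  "inv_seq xs \<longleftrightarrow> (\<forall>i < length xs. xs ! i < Suc i)"

definition reduction :: "nat list \<Rightarrow> nat list" where
  "reduction xs = map (\<lambda>x. card {y \<in> set xs. y < x}) xs"

definition contains_pat :: "nat list \<Rightarrow> nat list \<Rightarrow> bool" where
  "contains_pat xs \<sigma> \<longleftrightarrow> (\<exists>ys. subseq ys xs \<and> reduction ys = \<sigma>)"

definition avoids :: "nat list \<Rightarrow> nat list \<Rightarrow> bool" where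
  "avoids xs \<sigma> \<longleftrightarrow> \<not> contains_pat xs \<sigma>"

definition I_count :: "nat \<Rightarrow> nat" where
  "I_count n = card {xs. length xs = n \<and> inv_seq xs \<and>
      avoids xs [1,0,2] \<and> avoids xs [2,0,1] \<and> avoids xs [2,1,0]}"

end

theory Submission
  imports Defs
begin


lemma cardc: "card {y. (y = a \<or> y = b \<or> y = (c::nat)) \<and> y < x} =
   card ({a,b,c} \<inter> {..<x})" by (rule arg_cong[where f=card]) auto

lemma red3: "reduction [a,b,c] = [p,q,r] \<longleftrightarrow> card ({a,b,c} \<inter> {..<a}) = p \<and> card ({a,b,c} \<inter> {..<b}) = q \<and> card ({a,b,c} \<inter> {..<c}) = r"
  unfolding reduction_def by (simp add: cardc)

lemma r102: "reduction [a,b,c] = [1,0,2] \<longleftrightarrow> b < a \<and> a < c"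
  unfolding red3
  by (cases rule: linorder_cases[of a b]; cases rule: linorder_cases[of a c]; cases rule: linorder_cases[of b c]) (auto simp: Int_insert_left card_insert_if)
lemma r201: "reduction [a,b,c] = [2,0,1] \<longleftrightarrow> b < c \<and> c < a"
  unfolding red3
  by (cases rule: linorder_cases[of a b]; cases rule: linorder_cases[of a c]; cases rule: linorder_cases[of b c]) (auto simp: Int_insert_left card_insert_if)
lemma r210: "reduction [a,b,c] = [2,1,0] \<longleftrightarrow> c < b \<and> b < a"
  unfolding red3
  by (cases rule: linorder_cases[of a b]; cases rule: linorder_cases[of a c]; cases rule: linorder_cases[of b c]) (auto simp: Int_insert_left card_insert_if)

lemma len3: "length ys = 3 \<Longrightarrow> \<exists>a b c. ys = [a,b,c]"
  by (auto simp: length_Suc_conv numeral_3_eq_3)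

lemma contains3: assumes "length \<sigma> = 3"
  shows "contains_pat xs \<sigma> \<longleftrightarrow> (\<exists>a b c. subseq [a,b,c] xs \<and> reduction [a,b,c] = \<sigma>)"
proof
  assume "contains_pat xs \<sigma>"
  then obtain ys where ys: "subseq ys xs" "reduction ys = \<sigma>" unfolding contains_pat_def by blast
  then have "length ys = 3" using assms by (metis length_map reduction_def)
  then obtain a b c where "ys = [a,b,c]" using len3 by blast
  then show "\<exists>a b c. subseq [a,b,c] xs \<and> reduction [a,b,c] = \<sigma>" using ys by blast
qed (auto simp: contains_pat_def)

definition av :: "nat list \<Rightarrow> bool" where
  "av xs \<longleftrightarrow> avoids xs [1,0,2] \<and> avoids xs [2,0,1] \<and> avoids xs [2,1,0]"

lemma c102: "contains_pat xs [1,0,2] \<longleftrightarrow> (\<exists>a b c. subseq [a,b,c] xs \<and> b < a \<and> a < c)"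
proof -
  have l: "length [1,0,2::nat] = 3" by simp
  show ?thesis unfolding contains3[OF l] r102 by (rule refl)
qed
lemma c201: "contains_pat xs [2,0,1] \<longleftrightarrow> (\<exists>a b c. subseq [a,b,c] xs \<and> b < c \<and> c < a)"
proof -
  have l: "length [2,0,1::nat] = 3" by simp
  show ?thesis unfolding contains3[OF l] r201 by (rule refl)
qed
lemma c210: "contains_pat xs [2,1,0] \<longleftrightarrow> (\<exists>a b c. subseq [a,b,c] xs \<and> c < b \<and> b < a)"
proof -
  have l: "length [2,1,0::nat] = 3" by simp
  show ?thesis unfolding contains3[OF l] r210 by (rule refl)
qed

lemma av_iff: "av xs \<longleftrightarrow> \<not>(\<exists>a b c. subseq [a,b,c] xs \<and> b < a \<and> c \<noteq> a \<and> c \<noteq> b)"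
proof -
  have "(\<exists>a b c. subseq [a,b,c] xs \<and> b < a \<and> c \<noteq> a \<and> c \<noteq> b) \<longleftrightarrow>
     contains_pat xs [1,0,2] \<or> contains_pat xs [2,0,1] \<or> contains_pat xs [2,1,0]"
  proof
    assume "\<exists>a b c. subseq [a,b,c] xs \<and> b < a \<and> c \<noteq> a \<and> c \<noteq> b"
    then obtain a b c where h: "subseq [a,b,c] xs" "b < a" "c \<noteq> a" "c \<noteq> b" by blast
    show "contains_pat xs [1,0,2] \<or> contains_pat xs [2,0,1] \<or> contains_pat xs [2,1,0]"
    proof (cases "a < c")
      case True then show ?thesis using h unfolding c102 by blast
    next
      case False
      show ?thesis
      proof (cases "b < c")
        case True then show ?thesis using h False unfolding c201 by (meson linorder_neqE_nat)
      next
        case F2: False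
        then have "c < b" using h by simp
        then show ?thesis using h unfolding c210 by blast
      qed
    qed
  next
    assume "contains_pat xs [1,0,2] \<or> contains_pat xs [2,0,1] \<or> contains_pat xs [2,1,0]"
    then show "\<exists>a b c. subseq [a,b,c] xs \<and> b < a \<and> c \<noteq> a \<and> c \<noteq> b"
      unfolding c102 c201 c210
    proof (elim disjE exE conjE)
      fix a b c :: nat assume h: "subseq [a,b,c] xs" "b < a" "a < c"
      then have "c \<noteq> a \<and> c \<noteq> b" by simp
      then show ?thesis using h by blast
    next
      fix a b c :: nat assume h: "subseq [a,b,c] xs" "b < c" "c < a"
      then have "b < a \<and> c \<noteq> a \<and> c \<noteq> b" by simp
      then show ?thesis using h by blast
    next
      fix a b c :: nat assume h: "subseq [a,b,c] xs" "c < b" "b < a"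
      then have "c \<noteq> a \<and> c \<noteq> b" by simp
      then show ?thesis using h by blast
    qed
  qed
  then show ?thesis unfolding av_def avoids_def by blast
qed

lemma subseq_single: "subseq ys [x] \<longleftrightarrow> ys = [] \<or> ys = [x]"
proof (cases ys)
  case Nil then show ?thesis by simp
next
  case (Cons y ys')
  show ?thesis
  proof (cases "y = x")
    case True then show ?thesis using Cons by (auto dest: list_emb_Nil2)
  next
    case False then show ?thesis using Cons by simp
  qed
qed

lemma subseq_snoc: "subseq ys (xs@[x]) \<longleftrightarrow> subseq ys xs \<or> (\<exists>ys'. ys = ys'@[x] \<and> subseq ys' xs)"
proof
  assume "subseq ys (xs@[x])"
  then obtain xs1 xs2 where h: "ys = xs1 @ xs2" "subseq xs1 xs" "subseq xs2 [x]"
    by (auto simp only: subseq_append_iff)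
  from h(3) have "xs2 = [] \<or> xs2 = [x]" by (simp only: subseq_single)
  then show "subseq ys xs \<or> (\<exists>ys'. ys = ys'@[x] \<and> subseq ys' xs)" using h by auto
next
  assume "subseq ys xs \<or> (\<exists>ys'. ys = ys'@[x] \<and> subseq ys' xs)"
  then show "subseq ys (xs@[x])"
  proof
    assume "subseq ys xs" then show ?thesis by (rule subseq_rev_drop_many)
  next
    assume "\<exists>ys'. ys = ys'@[x] \<and> subseq ys' xs"
    then obtain ys' where "ys = ys'@[x]" "subseq ys' xs" by blast
    then show ?thesis by simp
  qed
qed

lemma subseq3_snoc: "subseq [a,b,c] (xs@[x]) \<longleftrightarrow> subseq [a,b,c] xs \<or> (subseq [a,b] xs \<and> c = x)"
  unfolding subseq_snoc by (auto simp only: append_eq_Cons_conv snoc_eq_iff_butlast) (auto)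

lemma subseq2_snoc: "subseq [a,b] (xs@[x]) \<longleftrightarrow> subseq [a,b] xs \<or> (a \<in> set xs \<and> b = x)"
  unfolding subseq_snoc by (auto simp only: append_eq_Cons_conv snoc_eq_iff_butlast subseq_singleton_left) (auto simp: subseq_singleton_left)

lemma subseq2_Cons: "subseq [a,b] (y#ys) \<longleftrightarrow> (a = y \<and> b \<in> set ys) \<or> subseq [a,b] ys"
proof (cases "a = y")
  case True
  have "subseq [a,b] ys \<Longrightarrow> b \<in> set ys" using subseq_Cons' subseq_singleton_left by metis
  then show ?thesis using True by (auto simp: subseq_singleton_left)
next
  case False
  then show ?thesis by simp
qed

lemma subseq2_split: "subseq [a,b] xs \<longleftrightarrow> (\<exists>us ws. xs = us @ b # ws \<and> a \<in> set us)"
proof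
  assume "subseq [a,b] xs" then show "\<exists>us ws. xs = us @ b # ws \<and> a \<in> set us"
  proof (induct xs rule: list.induct)
    case Nil then show ?case by simp
  next
    case (Cons y ys)
    show ?case
    proof (cases "a = y \<and> b \<in> set ys")
      case True
      then obtain us ws where "ys = us @ b # ws" using split_list[of b ys] by blast
      then show ?thesis using True by (intro exI[of _ "y#us"] exI[of _ ws]) auto
    next
      case False
      then have "subseq [a,b] ys" using Cons.prems by (simp only: subseq2_Cons) blast
      then obtain us ws where "ys = us @ b # ws \<and> a \<in> set us" using Cons.hyps by blast
      then show ?thesis by (intro exI[of _ "y#us"] exI[of _ ws]) auto
    qed
  qed
next
  assume "\<exists>us ws. xs = us @ b # ws \<and> a \<in> set us"
  then obtain us ws where xs: "xs = us @ b # ws" and a: "a \<in> set us" by blast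
  have 1: "subseq [a] us" using a subseq_singleton_left by metis
  have 2: "subseq [b] (b#ws)" by simp
  have "subseq ([a]@[b]) (us @ (b#ws))" by (rule list_emb_append_mono[OF 1 2])
  then show "subseq [a,b] xs" using xs by simp
qed

lemma sorted_iff_subseq: "sorted xs \<longleftrightarrow> (\<forall>a b. subseq [a,b] xs \<longrightarrow> a \<le> (b::nat))"
proof (induct xs rule: list.induct)
  case Nil then show ?case by simp
next
  case (Cons y ys)
  show ?case by (simp only: sorted_simps subseq2_Cons Cons.hyps) blast
qed



lemma sub3_2: "subseq [a,b,c] xs \<Longrightarrow> subseq [a,b] xs"
proof -
  assume h: "subseq [a,b,c] xs"
  have "subseq [a,b] [a,b,c]" by simp
  then show ?thesis using h by (rule subseq_order.order_trans)
qed

definition invp :: "nat list \<Rightarrow> nat \<Rightarrow> nat \<Rightarrow> bool" where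
  "invp xs a b \<longleftrightarrow> subseq [a,b] xs \<and> b < a"

definition allowed :: "nat list \<Rightarrow> nat set" where
  "allowed xs = {x. \<forall>a b. invp xs a b \<longrightarrow> x = a \<or> x = b}"

lemma av_snoc: "av (xs@[x]) \<longleftrightarrow> av xs \<and> x \<in> allowed xs"
proof -
  have "av (xs@[x]) \<longleftrightarrow> \<not>(\<exists>a b c. (subseq [a,b,c] xs \<or> (subseq [a,b] xs \<and> c = x)) \<and> b < a \<and> c \<noteq> a \<and> c \<noteq> b)"
    by (simp only: av_iff subseq3_snoc)
  also have "\<dots> \<longleftrightarrow> av xs \<and> (\<forall>a b. subseq [a,b] xs \<and> b < a \<longrightarrow> x = a \<or> x = b)"
    unfolding av_iff by auto
  finally show ?thesis unfolding allowed_def invp_def by simp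
qed

lemma invp_snoc: "invp (xs@[x]) a b \<longleftrightarrow> invp xs a b \<or> (a \<in> set xs \<and> b = x \<and> x < a)"
  by (simp only: invp_def subseq2_snoc) auto

lemma allowed_snoc: "allowed (xs@[x]) = allowed xs \<inter> {z. \<forall>a\<in>set xs. x < a \<longrightarrow> z = a \<or> z = x}"
  unfolding allowed_def invp_snoc by blast

lemma sorted_noinv: "sorted xs \<longleftrightarrow> \<not>(\<exists>a b. invp xs a b)"
  unfolding sorted_iff_subseq invp_def by (meson not_le)

lemma sorted_allowed: "sorted xs \<Longrightarrow> allowed xs = UNIV"
  unfolding allowed_def using sorted_noinv by blast

lemma sorted_av: "sorted xs \<Longrightarrow> av xs"
  unfolding av_iff using sorted_iff_subseq sub3_2 by (meson leD)

lemma invp_set: "invp xs a b \<Longrightarrow> a \<in> set xs \<and> b \<in> set xs"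
proof -
  assume "invp xs a b"
  then obtain us ws where "xs = us @ b # ws" "a \<in> set us" unfolding invp_def subseq2_split by blast
  then show ?thesis by simp
qed

lemma allowed_sub: "invp xs a b \<Longrightarrow> allowed xs \<subseteq> {a,b}"
  unfolding allowed_def by blast

lemma ns_allowed_set: "\<not> sorted xs \<Longrightarrow> allowed xs \<subseteq> set xs"
  using sorted_noinv allowed_sub invp_set by blast

lemma last_allowed: assumes "av xs" "xs \<noteq> []" shows "last xs \<in> allowed xs"
  unfolding allowed_def
proof (intro CollectI allI impI)
  fix a b assume ab: "invp xs a b"
  have xs: "xs = butlast xs @ [last xs]" using assms(2) by simp
  have "subseq [a,b] (butlast xs @ [last xs])" using ab xs unfolding invp_def by simp
  then have "subseq [a,b] (butlast xs) \<or> (a \<in> set (butlast xs) \<and> b = last xs)"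
    by (simp only: subseq2_snoc)
  then show "last xs = a \<or> last xs = b"
  proof
    assume "subseq [a,b] (butlast xs)"
    then have "subseq [a,b,last xs] (butlast xs @ [last xs])" by (simp add: subseq3_snoc)
    then have "subseq [a,b,last xs] xs" using xs by simp
    then show ?thesis using assms(1) ab unfolding av_iff invp_def by blast
  qed simp
qed

lemma sub3_split: "xs = us @ b # ws \<Longrightarrow> a \<in> set us \<Longrightarrow> c \<in> set ws \<Longrightarrow> subseq [a,b,c] xs"
proof -
  assume h: "xs = us @ b # ws" "a \<in> set us" "c \<in> set ws"
  have 1: "subseq [a] us" using h(2) subseq_singleton_left by metis
  have "subseq [c] ws" using h(3) subseq_singleton_left by metis
  then have 2: "subseq [b,c] (b#ws)" by simp
  have "subseq ([a]@[b,c]) (us @ (b#ws))" by (rule list_emb_append_mono[OF 1 2])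
  then show ?thesis using h by simp
qed

lemma allowed_snoc_ns: assumes "av xs" "\<not> sorted xs" "x \<in> allowed xs"
  shows "allowed (xs@[x]) = allowed xs"
proof -
  have "allowed xs \<subseteq> {z. \<forall>a\<in>set xs. x < a \<longrightarrow> z = a \<or> z = x}"
  proof (intro subsetI CollectI ballI impI)
    fix z a assume z: "z \<in> allowed xs" and a: "a \<in> set xs" "x < a"
    show "z = a \<or> z = x"
    proof (cases "z = x")
      case False
      obtain a1 b1 where i1: "invp xs a1 b1" using assms(2) sorted_noinv by blast
      have xz: "x \<in> {a1,b1}" "z \<in> {a1,b1}" using allowed_sub[OF i1] assms(3) z by auto
      have b1a1: "b1 < a1" using i1 unfolding invp_def by simp
      have "subseq [a1,b1] xs" using i1 unfolding invp_def by simp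
      then obtain us ws where xs: "xs = us @ b1 # ws" "a1 \<in> set us" unfolding subseq2_split by blast
      have "a \<in> set us \<or> a = b1 \<or> a \<in> set ws" using a(1) xs(1) by auto
      then show ?thesis
      proof (elim disjE)
        assume "a \<in> set us"
        then have "subseq [a,b1] xs" unfolding subseq2_split by (intro exI[of _ us] exI[of _ ws]) (simp add: xs(1))
        moreover have "b1 < a" using xz False b1a1 a(2) by auto
        ultimately have ii: "invp xs a b1" unfolding invp_def by simp
        have "x \<in> {a,b1}" "z \<in> {a,b1}" using allowed_sub[OF ii] assms(3) z by auto
        then show ?thesis using a(2) False by auto
      next
        assume "a = b1" then show ?thesis using xz False a(2) by auto
      next
        assume "a \<in> set ws"
        then have s3: "subseq [a1,b1,a] xs" by (rule sub3_split[OF xs(1) xs(2)])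
        from assms(1) have "\<forall>a' b' c'. subseq [a',b',c'] xs \<longrightarrow> b' < a' \<longrightarrow> c' = a' \<or> c' = b'"
          unfolding av_iff by blast
        then have "a = a1 \<or> a = b1" using s3 b1a1 by blast
        then show ?thesis using xz False a(2) by auto
      qed
    qed simp
  qed
  then show ?thesis unfolding allowed_snoc by (rule Int_absorb2)
qed

definition lastv :: "nat list \<Rightarrow> nat" where
  "lastv xs = (if xs = [] then 0 else last xs)"

lemma sorted_le_last: "sorted xs \<Longrightarrow> a \<in> set xs \<Longrightarrow> a \<le> lastv xs"
proof -
  assume h: "sorted xs" "a \<in> set xs"
  then have ne: "xs \<noteq> []" by auto
  then have xs: "xs = butlast xs @ [last xs]" by simp
  have "sorted (butlast xs @ [last xs])" using h(1) xs by simp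
  then have le: "\<forall>y\<in>set (butlast xs). y \<le> last xs" by (simp add: sorted_append)
  have "set xs = insert (last xs) (set (butlast xs))" by (subst xs) simp
  then have "a \<in> set (butlast xs) \<or> a = last xs" using h(2) by blast
  then show ?thesis using le ne unfolding lastv_def by auto
qed

lemma sorted_snoc_iff: "sorted xs \<Longrightarrow> sorted (xs@[x]) \<longleftrightarrow> lastv xs \<le> x"
proof -
  assume s: "sorted xs"
  have "(\<forall>y\<in>set xs. y \<le> x) \<longleftrightarrow> lastv xs \<le> x"
  proof
    assume "\<forall>y\<in>set xs. y \<le> x" then show "lastv xs \<le> x" unfolding lastv_def by auto
  next
    assume "lastv xs \<le> x" then show "\<forall>y\<in>set xs. y \<le> x" using sorted_le_last[OF s] order_trans by blast
  qed
  then show ?thesis using s by (simp add: sorted_append)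
qed

lemma allowed_sorted_snoc: "sorted p \<Longrightarrow> allowed (p@[x]) = {z. \<forall>a\<in>set p. x < a \<longrightarrow> z = a \<or> z = x}"
  unfolding allowed_snoc using sorted_allowed by simp

lemma card_allowed_sorted_snoc:
  assumes "sorted p" "x < lastv p"
  shows "card (allowed (p@[x])) = 2 \<longleftrightarrow> (\<forall>a\<in>set p. a \<le> x \<or> a = lastv p)"
proof -
  have ne: "p \<noteq> []" using assms(2) unfolding lastv_def by auto
  then have lp: "lastv p \<in> set p" unfolding lastv_def by simp
  show ?thesis
  proof
    assume c2: "card (allowed (p@[x])) = 2"
    show "\<forall>a\<in>set p. a \<le> x \<or> a = lastv p"
    proof (rule ccontr)
      assume "\<not> (\<forall>a\<in>set p. a \<le> x \<or> a = lastv p)"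
      then obtain a where a: "a \<in> set p" "x < a" "a \<noteq> lastv p" by auto
      have "allowed (p@[x]) \<subseteq> {x}" unfolding allowed_sorted_snoc[OF assms(1)]
        using a lp assms(2) by auto
      then have "card (allowed (p@[x])) \<le> card {x}" by (intro card_mono) auto
      then have "card (allowed (p@[x])) \<le> 1" by simp
      then show False using c2 by simp
    qed
  next
    assume h: "\<forall>a\<in>set p. a \<le> x \<or> a = lastv p"
    have "allowed (p@[x]) = {x, lastv p}" unfolding allowed_sorted_snoc[OF assms(1)]
      using h lp assms(2) by auto
    then show "card (allowed (p@[x])) = 2" using assms(2) by simp
  qed
qed

lemma inv_seq_snoc: "inv_seq (xs@[x]) \<longleftrightarrow> inv_seq xs \<and> x \<le> length xs"
proof
  assume h: "inv_seq (xs@[x])"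
  have "\<forall>i<length xs. xs ! i < Suc i"
  proof (intro allI impI)
    fix i assume "i < length xs"
    then have "(xs@[x]) ! i < Suc i" using h[unfolded inv_seq_def, rule_format, of i] by simp
    then show "xs ! i < Suc i" using \<open>i < length xs\<close> by (simp add: nth_append)
  qed
  moreover have "(xs@[x]) ! length xs < Suc (length xs)" using h[unfolded inv_seq_def, rule_format, of "length xs"] by simp
  then have "x < Suc (length xs)" by simp
  ultimately show "inv_seq xs \<and> x \<le> length xs" unfolding inv_seq_def by simp
next
  assume h: "inv_seq xs \<and> x \<le> length xs"
  show "inv_seq (xs@[x])" unfolding inv_seq_def
  proof (intro allI impI)
    fix i assume i: "i < length (xs@[x])"
    show "(xs@[x]) ! i < Suc i"
    proof (cases "i < length xs")
      case True then show ?thesis using h unfolding inv_seq_def by (simp add: nth_append)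
    next
      case False then have "i = length xs" using i by simp
      then show ?thesis using h by simp
    qed
  qed
qed

lemma inv_seq_set: "inv_seq xs \<Longrightarrow> y \<in> set xs \<Longrightarrow> y < length xs"
proof -
  assume h: "inv_seq xs" "y \<in> set xs"
  then obtain i where i: "i < length xs" "xs ! i = y" by (auto simp: in_set_conv_nth)
  then have "y < Suc i" using h(1) unfolding inv_seq_def by auto
  then show ?thesis using i(1) by simp
qed

lemma lastv_lt: "inv_seq xs \<Longrightarrow> xs \<noteq> [] \<Longrightarrow> lastv xs < length xs"
proof -
  assume h: "inv_seq xs" "xs \<noteq> []"
  then have "last xs \<in> set xs" by simp
  then have "last xs < length xs" using inv_seq_set[OF h(1)] by blast
  then show ?thesis using h(2) unfolding lastv_def by simp
qed

lemma fin_inv: "finite {xs. length xs = n \<and> inv_seq xs \<and> P xs}"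
proof (rule finite_subset)
  show "{xs. length xs = n \<and> inv_seq xs \<and> P xs} \<subseteq> {xs. set xs \<subseteq> {..<n} \<and> length xs = n}"
  proof
    fix xs assume "xs \<in> {xs. length xs = n \<and> inv_seq xs \<and> P xs}"
    then have h: "length xs = n" "inv_seq xs" by auto
    have "set xs \<subseteq> {..<n}" using inv_seq_set[OF h(2)] h(1) by auto
    then show "xs \<in> {xs. set xs \<subseteq> {..<n} \<and> length xs = n}" using h(1) by simp
  qed
  show "finite {xs. set xs \<subseteq> {..<n} \<and> length xs = n}" by (rule finite_lists_length_eq) simp
qed

lemma sum_snoc:
  assumes "finite {xs. length xs = n \<and> Q xs}" "\<And>xs x. P (xs@[x]) \<Longrightarrow> Q xs"
    "\<And>xs. length xs = n \<Longrightarrow> Q xs \<Longrightarrow> finite {x. P (xs@[x])}"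
  shows "sum f {ys. length ys = Suc n \<and> P ys} = (\<Sum>xs\<in>{xs. length xs = n \<and> Q xs}. \<Sum>x\<in>{x. P (xs@[x])}. f (xs@[x]))"
proof -
  let ?S = "SIGMA xs:{xs. length xs = n \<and> Q xs}. {x. P (xs@[x])}"
  have eq: "{ys. length ys = Suc n \<and> P ys} = (\<lambda>(xs,x). xs@[x]) ` ?S"
  proof
    show "{ys. length ys = Suc n \<and> P ys} \<subseteq> (\<lambda>(xs,x). xs@[x]) ` ?S"
    proof
      fix ys assume "ys \<in> {ys. length ys = Suc n \<and> P ys}"
      then have h: "length ys = Suc n" "P ys" by auto
      then have ne: "ys \<noteq> []" by auto
      then have ys: "ys = butlast ys @ [last ys]" by simp
      have "(butlast ys, last ys) \<in> ?S" using h ys assms(2)[of "butlast ys" "last ys"] by auto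
      then show "ys \<in> (\<lambda>(xs,x). xs@[x]) ` ?S" using ys by force
    qed
  qed (auto simp: assms(2))
  have inj: "inj_on (\<lambda>(xs,x). xs@[x]) ?S" by (auto simp: inj_on_def)
  have "sum f {ys. length ys = Suc n \<and> P ys} = sum (f \<circ> (\<lambda>(xs,x). xs@[x])) ?S"
    unfolding eq by (rule sum.reindex[OF inj])
  also have "\<dots> = (\<Sum>(xs,x)\<in>?S. f (xs@[x]))"
    by (rule sum.cong) auto
  also have "\<dots> = (\<Sum>xs\<in>{xs. length xs = n \<and> Q xs}. \<Sum>x\<in>{x. P (xs@[x])}. f (xs@[x]))"
    by (rule sum.Sigma[symmetric]) (auto simp: assms(1) assms(3))
  finally show ?thesis .
qed




definition INC :: "nat \<Rightarrow> nat list set" where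
  "INC n = {xs. length xs = n \<and> inv_seq xs \<and> sorted xs}"
definition AVs :: "nat \<Rightarrow> nat list set" where
  "AVs n = {xs. length xs = n \<and> inv_seq xs \<and> av xs}"
definition NS :: "nat \<Rightarrow> nat list set" where
  "NS n = {xs. length xs = n \<and> inv_seq xs \<and> av xs \<and> \<not> sorted xs}"
definition Bs :: "nat \<Rightarrow> nat list set" where
  "Bs n = {xs. length xs = n \<and> inv_seq xs \<and> av xs \<and> \<not> sorted xs \<and> card (allowed xs) = 2}"
definition ecount :: "nat list \<Rightarrow> nat" where
  "ecount p = card {x. x < lastv p \<and> (\<forall>a\<in>set p. a \<le> x \<or> a = lastv p)}"

lemma lastv_snoc[simp]: "lastv (xs@[x]) = x" by (simp add: lastv_def)

lemma INC_fin: "finite (INC n)" unfolding INC_def by (rule fin_inv)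
lemma AVs_fin: "finite (AVs n)" unfolding AVs_def by (rule fin_inv)
lemma NS_fin: "finite (NS n)" unfolding NS_def by (rule fin_inv)
lemma Bs_fin: "finite (Bs n)" unfolding Bs_def by (rule fin_inv)

lemma INC_lastv: assumes "p \<in> INC n" shows "lastv p \<le> n"
proof (cases "p = []")
  case True then show ?thesis by (simp add: lastv_def)
next
  case False
  have "inv_seq p" "length p = n" using assms unfolding INC_def by auto
  then show ?thesis using lastv_lt[OF _ False] by fastforce
qed

lemma sum_snoc_inv:
  assumes "\<And>xs x. S (xs@[x]) \<Longrightarrow> inv_seq (xs@[x]) \<Longrightarrow> R xs"
  shows "sum f {ys. length ys = Suc n \<and> inv_seq ys \<and> S ys} =
    (\<Sum>xs\<in>{xs. length xs = n \<and> inv_seq xs \<and> R xs}. \<Sum>x\<in>{x. inv_seq (xs@[x]) \<and> S (xs@[x])}. f (xs@[x]))"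
proof (rule sum_snoc)
  show "finite {xs. length xs = n \<and> inv_seq xs \<and> R xs}" by (rule fin_inv)
  show "inv_seq xs \<and> R xs" if "inv_seq (xs @ [x]) \<and> S (xs @ [x])" for xs x
    using that assms inv_seq_snoc by blast
  show "finite {x. inv_seq (xs @ [x]) \<and> S (xs @ [x])}" for xs
  proof (rule finite_subset)
    show "{x. inv_seq (xs @ [x]) \<and> S (xs @ [x])} \<subseteq> {..length xs}" using inv_seq_snoc by auto
  qed simp
qed

lemma INC_snoc_set: assumes "p \<in> INC n" shows "{x. inv_seq (p@[x]) \<and> sorted (p@[x])} = {lastv p..n}"
proof -
  have h: "length p = n" "inv_seq p" "sorted p" using assms unfolding INC_def by auto
  show ?thesis using h by (auto simp: inv_seq_snoc sorted_snoc_iff)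
qed

lemma sum_INC: "sum f (INC (Suc n)) = (\<Sum>p\<in>INC n. \<Sum>x\<in>{lastv p..n}. f (p@[x]))"
proof -
  have "sum f (INC (Suc n)) = (\<Sum>xs\<in>INC n. \<Sum>x\<in>{x. inv_seq (xs@[x]) \<and> sorted (xs@[x])}. f (xs@[x]))"
    unfolding INC_def by (rule sum_snoc_inv) (simp add: sorted_append)
  also have "\<dots> = (\<Sum>p\<in>INC n. \<Sum>x\<in>{lastv p..n}. f (p@[x]))"
    by (rule sum.cong[OF refl]) (simp add: INC_snoc_set)
  finally show ?thesis .
qed

lemma INC_rec: "card (INC (Suc n)) = (\<Sum>p\<in>INC n. Suc n - lastv p)"
proof -
  have "card (INC (Suc n)) = sum (\<lambda>_. 1) (INC (Suc n))" by simp
  also have "\<dots> = (\<Sum>p\<in>INC n. \<Sum>x\<in>{lastv p..n}. 1)" by (rule sum_INC)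
  also have "\<dots> = (\<Sum>p\<in>INC n. Suc n - lastv p)" by simp
  finally show ?thesis .
qed

lemma INC_rec2: "card (INC (Suc (Suc n))) = (\<Sum>p\<in>INC n. \<Sum>x\<in>{lastv p..n}. Suc (Suc n) - x)"
proof -
  have "card (INC (Suc (Suc n))) = (\<Sum>r\<in>INC (Suc n). Suc (Suc n) - lastv r)" by (rule INC_rec)
  also have "\<dots> = (\<Sum>p\<in>INC n. \<Sum>x\<in>{lastv p..n}. Suc (Suc n) - lastv (p@[x]))" by (rule sum_INC)
  finally show ?thesis by simp
qed

lemma sorted_all_le: "sorted p \<Longrightarrow> (\<forall>a\<in>set p. a \<le> y) \<longleftrightarrow> lastv p \<le> y"
proof -
  assume s: "sorted p"
  show ?thesis
  proof
    assume "\<forall>a\<in>set p. a \<le> y" then show "lastv p \<le> y" unfolding lastv_def by auto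
  next
    assume "lastv p \<le> y" then show "\<forall>a\<in>set p. a \<le> y" using sorted_le_last[OF s] order_trans by blast
  qed
qed

lemma ecount_snoc: assumes "sorted p" "lastv p \<le> x"
  shows "ecount (p@[x]) = (if x = lastv p then ecount p else 0) + (x - lastv p)"
proof (cases "x = lastv p")
  case True
  have "{y. y < lastv (p@[x]) \<and> (\<forall>a\<in>set (p@[x]). a \<le> y \<or> a = lastv (p@[x]))} =
        {y. y < lastv p \<and> (\<forall>a\<in>set p. a \<le> y \<or> a = lastv p)}" using True by auto
  then show ?thesis using True unfolding ecount_def by simp
next
  case False
  then have lt: "lastv p < x" using assms(2) by simp
  have ne: "\<forall>a\<in>set p. a \<noteq> x" using sorted_le_last[OF assms(1)] lt by fastforce
  have "{y. y < lastv (p@[x]) \<and> (\<forall>a\<in>set (p@[x]). a \<le> y \<or> a = lastv (p@[x]))} =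
        {y. y < x \<and> (\<forall>a\<in>set p. a \<le> y)}" using ne by auto
  also have "\<dots> = {lastv p..<x}" using sorted_all_le[OF assms(1)] by auto
  finally show ?thesis using False unfolding ecount_def by simp
qed

lemma AR: "v \<le> n \<Longrightarrow> (\<Sum>x\<in>{v..n}. x - v) + 2 * (Suc n - v) = (\<Sum>x\<in>{v..n}. Suc (Suc n) - x)"
proof (induction n)
  case 0 then show ?case by simp
next
  case (Suc n)
  show ?case
  proof (cases "v = Suc n")
    case True then show ?thesis by simp
  next
    case False
    then have v: "v \<le> n" using Suc.prems by simp
    have 1: "(\<Sum>x\<in>{v..Suc n}. x - v) = (\<Sum>x\<in>{v..n}. x - v) + (Suc n - v)"
      using v by (simp add: sum.cl_ivl_Suc)
    have "(\<Sum>x\<in>{v..n}. Suc (Suc (Suc n)) - x) = (\<Sum>x\<in>{v..n}. (Suc (Suc n) - x) + 1)"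
      by (rule sum.cong) auto
    also have "\<dots> = (\<Sum>x\<in>{v..n}. Suc (Suc n) - x) + (\<Sum>x\<in>{v..n}. 1)"
      by (rule sum.distrib)
    also have "\<dots> = (\<Sum>x\<in>{v..n}. Suc (Suc n) - x) + (Suc n - v)"
      by simp
    finally have 2: "(\<Sum>x\<in>{v..Suc n}. Suc (Suc (Suc n)) - x) = (\<Sum>x\<in>{v..n}. Suc (Suc n) - x) + (Suc n - v) + 2"
      using v by (simp add: sum.cl_ivl_Suc)
    show ?thesis unfolding 1 2 using Suc.IH[OF v] v by simp
  qed
qed

lemma E_rec: "(\<Sum>p\<in>INC (Suc n). ecount p) + 2 * card (INC (Suc n)) =
   (\<Sum>p\<in>INC n. ecount p) + card (INC (Suc (Suc n)))"
proof -
  have e: "(\<Sum>x\<in>{lastv p..n}. ecount (p@[x])) = ecount p + (\<Sum>x\<in>{lastv p..n}. x - lastv p)"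
    if p: "p \<in> INC n" for p
  proof -
    have s: "sorted p" using p unfolding INC_def by simp
    have v: "lastv p \<le> n" using INC_lastv[OF p] .
    have "(\<Sum>x\<in>{lastv p..n}. ecount (p@[x])) =
      (\<Sum>x\<in>{lastv p..n}. (if x = lastv p then ecount p else 0) + (x - lastv p))"
      by (rule sum.cong) (auto simp: ecount_snoc[OF s])
    also have "\<dots> = (\<Sum>x\<in>{lastv p..n}. (if x = lastv p then ecount p else 0)) + (\<Sum>x\<in>{lastv p..n}. x - lastv p)"
      by (rule sum.distrib)
    also have "(\<Sum>x\<in>{lastv p..n}. (if x = lastv p then ecount p else 0)) = ecount p"
      using v by (simp add: sum.delta)
    finally show ?thesis .
  qed
  have "(\<Sum>p\<in>INC (Suc n). ecount p) + 2 * card (INC (Suc n)) =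
     (\<Sum>p\<in>INC n. \<Sum>x\<in>{lastv p..n}. ecount (p@[x])) + 2 * (\<Sum>p\<in>INC n. Suc n - lastv p)"
    by (simp only: sum_INC INC_rec)
  also have "\<dots> = (\<Sum>p\<in>INC n. ecount p + ((\<Sum>x\<in>{lastv p..n}. x - lastv p) + 2 * (Suc n - lastv p)))"
    by (simp add: e sum.distrib sum_distrib_left add.assoc)
  also have "\<dots> = (\<Sum>p\<in>INC n. ecount p + (\<Sum>x\<in>{lastv p..n}. Suc (Suc n) - x))"
    by (rule sum.cong[OF refl]) (simp add: AR INC_lastv)
  also have "\<dots> = (\<Sum>p\<in>INC n. ecount p) + card (INC (Suc (Suc n)))"
    by (simp add: sum.distrib INC_rec2)
  finally show ?thesis .
qed

lemma INC_AVs: "INC n \<subseteq> AVs n" unfolding INC_def AVs_def using sorted_av by auto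
lemma AVs_split: "AVs n = INC n \<union> NS n" unfolding INC_def AVs_def NS_def using sorted_av by auto
lemma INC_NS_disj: "INC n \<inter> NS n = {}" unfolding INC_def NS_def by auto
lemma Bs_NS: "Bs n = {xs\<in>NS n. card (allowed xs) = 2}" unfolding Bs_def NS_def by auto

lemma sum_AVs: "sum f (AVs n) = sum f (INC n) + sum f (NS n)"
  unfolding AVs_split by (rule sum.union_disjoint[OF INC_fin NS_fin INC_NS_disj])

lemma ns_props: assumes "xs \<in> NS n"
  shows "allowed xs \<subseteq> {..<n}" "finite (allowed xs)" "card (allowed xs) \<ge> 1" "card (allowed xs) \<le> 2"
    "\<And>x. x \<in> allowed xs \<Longrightarrow> allowed (xs@[x]) = allowed xs"
proof -
  have h: "length xs = n" "inv_seq xs" "av xs" "\<not> sorted xs" using assms unfolding NS_def by auto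
  have sub: "allowed xs \<subseteq> set xs" by (rule ns_allowed_set[OF h(4)])
  show "allowed xs \<subseteq> {..<n}" using sub inv_seq_set[OF h(2)] h(1) by auto
  show fin: "finite (allowed xs)" using sub finite_subset by blast
  have ne: "xs \<noteq> []" using h(4) by auto
  have "last xs \<in> allowed xs" by (rule last_allowed[OF h(3) ne])
  then show "card (allowed xs) \<ge> 1" using fin by (metis One_nat_def Suc_leI card_gt_0_iff empty_iff)
  obtain a b where ab: "invp xs a b" using h(4) sorted_noinv by blast
  have "card (allowed xs) \<le> card {a,b}" by (rule card_mono) (auto simp: allowed_sub[OF ab])
  also have "\<dots> \<le> 2" by (simp add: card_insert_le_m1)
  finally show "card (allowed xs) \<le> 2" .
  show "\<And>x. x \<in> allowed xs \<Longrightarrow> allowed (xs@[x]) = allowed xs" by (rule allowed_snoc_ns[OF h(3) h(4)])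
qed

lemma B_rec: "card (Bs (Suc n)) = (\<Sum>p\<in>INC n. ecount p) + 2 * card (Bs n)"
proof -
  let ?F = "\<lambda>xs. {x. inv_seq (xs@[x]) \<and> (av (xs@[x]) \<and> \<not> sorted (xs@[x]) \<and> card (allowed (xs@[x])) = 2)}"
  have "card (Bs (Suc n)) = sum (\<lambda>_. 1) (Bs (Suc n))" by simp
  also have "\<dots> = (\<Sum>xs\<in>AVs n. \<Sum>x\<in>?F xs. 1)"
    unfolding Bs_def AVs_def by (rule sum_snoc_inv) (simp add: av_snoc)
  also have "\<dots> = (\<Sum>xs\<in>AVs n. card (?F xs))" by simp
  also have "\<dots> = (\<Sum>xs\<in>INC n. card (?F xs)) + (\<Sum>xs\<in>NS n. card (?F xs))" by (rule sum_AVs)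
  also have "(\<Sum>xs\<in>INC n. card (?F xs)) = (\<Sum>p\<in>INC n. ecount p)"
  proof (rule sum.cong[OF refl])
    fix p assume p: "p \<in> INC n"
    have h: "length p = n" "inv_seq p" "sorted p" using p unfolding INC_def by auto
    have v: "lastv p \<le> n" by (rule INC_lastv[OF p])
    have "?F p = {x. x < lastv p \<and> (\<forall>a\<in>set p. a \<le> x \<or> a = lastv p)}"
    proof (intro set_eqI iffI)
      fix x assume "x \<in> ?F p"
      then have x: "\<not> sorted (p@[x])" "card (allowed (p@[x])) = 2" by auto
      then have "x < lastv p" using sorted_snoc_iff[OF h(3)] by simp
      then show "x \<in> {x. x < lastv p \<and> (\<forall>a\<in>set p. a \<le> x \<or> a = lastv p)}"
        using x(2) card_allowed_sorted_snoc[OF h(3)] by simp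
    next
      fix x assume "x \<in> {x. x < lastv p \<and> (\<forall>a\<in>set p. a \<le> x \<or> a = lastv p)}"
      then have x: "x < lastv p" "\<forall>a\<in>set p. a \<le> x \<or> a = lastv p" by auto
      have 1: "inv_seq (p@[x])" using x(1) v h by (simp add: inv_seq_snoc)
      have 2: "av (p@[x])" using sorted_av[OF h(3)] sorted_allowed[OF h(3)] by (simp add: av_snoc)
      have 3: "\<not> sorted (p@[x])" using sorted_snoc_iff[OF h(3)] x(1) by simp
      have 4: "card (allowed (p@[x])) = 2" using card_allowed_sorted_snoc[OF h(3) x(1)] x(2) by simp
      show "x \<in> ?F p" using 1 2 3 4 by simp
    qed
    then show "card (?F p) = ecount p" unfolding ecount_def by simp
  qed
  also have "(\<Sum>xs\<in>NS n. card (?F xs)) = (\<Sum>xs\<in>NS n. if card (allowed xs) = 2 then 2 else 0)"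
  proof (rule sum.cong[OF refl])
    fix xs assume xs: "xs \<in> NS n"
    have h: "length xs = n" "inv_seq xs" "av xs" "\<not> sorted xs" using xs unfolding NS_def by auto
    note np = ns_props[OF xs]
    have "?F xs = (if card (allowed xs) = 2 then allowed xs else {})"
    proof (intro set_eqI iffI)
      fix x assume "x \<in> ?F xs"
      then have x: "av (xs@[x])" "card (allowed (xs@[x])) = 2" by auto
      then have xa: "x \<in> allowed xs" by (simp add: av_snoc)
      then show "x \<in> (if card (allowed xs) = 2 then allowed xs else {})" using np(5)[OF xa] x(2) by simp
    next
      fix x assume x: "x \<in> (if card (allowed xs) = 2 then allowed xs else {})"
      then have xa: "x \<in> allowed xs" and c: "card (allowed xs) = 2" by (auto split: if_splits)
      have 1: "inv_seq (xs@[x])" using np(1) xa h by (auto simp: inv_seq_snoc)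
      have 2: "av (xs@[x])" using h(3) xa by (simp add: av_snoc)
      have 3: "\<not> sorted (xs@[x])" using h(4) by (simp add: sorted_append)
      show "x \<in> ?F xs" using 1 2 3 c np(5)[OF xa] by simp
    qed
    then show "card (?F xs) = (if card (allowed xs) = 2 then 2 else 0)" by simp
  qed
  also have "\<dots> = (\<Sum>xs\<in>NS n. if xs \<in> {xs. card (allowed xs) = 2} then 2 else 0)"
    by simp
  also have "\<dots> = (\<Sum>xs\<in>NS n \<inter> {xs. card (allowed xs) = 2}. 2)"
    by (rule sum.inter_restrict[OF NS_fin, symmetric])
  also have "NS n \<inter> {xs. card (allowed xs) = 2} = Bs n" unfolding Bs_NS by auto
  also have "(\<Sum>xs\<in>Bs n. (2::nat)) = 2 * card (Bs n)" by simp
  finally show ?thesis .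
qed

lemma I_rec: "card (AVs (Suc n)) = Suc n * card (INC n) + card (NS n) + card (Bs n)"
proof -
  let ?F = "\<lambda>xs. {x. inv_seq (xs@[x]) \<and> av (xs@[x])}"
  have "card (AVs (Suc n)) = sum (\<lambda>_. 1) (AVs (Suc n))" by simp
  also have "\<dots> = (\<Sum>xs\<in>AVs n. \<Sum>x\<in>?F xs. 1)"
    unfolding AVs_def by (rule sum_snoc_inv) (simp add: av_snoc)
  also have "\<dots> = (\<Sum>xs\<in>AVs n. card (?F xs))" by simp
  also have "\<dots> = (\<Sum>xs\<in>INC n. card (?F xs)) + (\<Sum>xs\<in>NS n. card (?F xs))" by (rule sum_AVs)
  also have "(\<Sum>xs\<in>INC n. card (?F xs)) = (\<Sum>xs\<in>INC n. Suc n)"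
  proof (rule sum.cong[OF refl])
    fix p assume p: "p \<in> INC n"
    have h: "length p = n" "inv_seq p" "sorted p" using p unfolding INC_def by auto
    have "?F p = {..n}" using h sorted_av[OF h(3)] sorted_allowed[OF h(3)]
      by (auto simp: inv_seq_snoc av_snoc)
    then show "card (?F p) = Suc n" by simp
  qed
  also have "(\<Sum>xs\<in>NS n. card (?F xs)) = (\<Sum>xs\<in>NS n. 1 + (if card (allowed xs) = 2 then 1 else 0))"
  proof (rule sum.cong[OF refl])
    fix xs assume xs: "xs \<in> NS n"
    have h: "length xs = n" "inv_seq xs" "av xs" "\<not> sorted xs" using xs unfolding NS_def by auto
    note np = ns_props[OF xs]
    have "?F xs = allowed xs" using np(1) h by (auto simp: inv_seq_snoc av_snoc)
    then show "card (?F xs) = 1 + (if card (allowed xs) = 2 then 1 else 0)" using np(3) np(4) by auto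
  qed
  also have "\<dots> = (\<Sum>xs\<in>NS n. 1) + (\<Sum>xs\<in>NS n. if xs \<in> {xs. card (allowed xs) = 2} then 1 else 0)"
    by (simp only: sum.distrib mem_Collect_eq)
  also have "(\<Sum>xs\<in>NS n. if xs \<in> {xs. card (allowed xs) = 2} then 1 else 0) = (\<Sum>xs\<in>NS n \<inter> {xs. card (allowed xs) = 2}. 1)"
    by (rule sum.inter_restrict[OF NS_fin, symmetric])
  also have "NS n \<inter> {xs. card (allowed xs) = 2} = Bs n" unfolding Bs_NS by auto
  finally show ?thesis by (simp add: mult.commute)
qed

lemma AVs_card: "card (AVs n) = card (INC n) + card (NS n)"
  unfolding AVs_split by (rule card_Un_disjoint[OF INC_fin NS_fin INC_NS_disj])

lemma INC0: "INC 0 = {[]}" unfolding INC_def by (auto simp: inv_seq_def)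
lemma AVs0: "AVs 0 = {[]}" unfolding AVs_def by (auto simp: inv_seq_def av_iff)
lemma NS0: "NS 0 = {}" unfolding NS_def by auto
lemma Bs0: "Bs 0 = {}" unfolding Bs_def by auto
lemma ecount_nil: "ecount [] = 0" unfolding ecount_def lastv_def by simp

lemma I_count_AVs: "I_count n = card (AVs n)"
  unfolding I_count_def AVs_def av_def by simp

definition Tc :: "nat \<Rightarrow> nat \<Rightarrow> nat" where
  "Tc l d = card {p\<in>INC l. lastv p = d}"

lemma T_rec: assumes "d \<le> l" shows "Tc (Suc l) d = (\<Sum>w\<le>d. Tc l w)"
proof -
  have "Tc (Suc l) d = sum (\<lambda>r. if lastv r = d then 1 else 0) (INC (Suc l))"
    unfolding Tc_def by (simp add: sum.inter_filter[OF INC_fin, symmetric])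
  also have "\<dots> = (\<Sum>p\<in>INC l. \<Sum>x\<in>{lastv p..l}. if x = d then 1 else 0)"
    by (simp only: sum_INC lastv_snoc)
  also have "\<dots> = (\<Sum>p\<in>INC l. if lastv p \<le> d then 1 else 0)"
    by (rule sum.cong[OF refl]) (use assms in \<open>simp add: sum.delta\<close>)
  also have "\<dots> = card {p\<in>INC l. lastv p \<le> d}"
    by (simp add: sum.inter_filter[OF INC_fin, symmetric])
  also have "{p\<in>INC l. lastv p \<le> d} = (\<Union>w\<in>{..d}. {p\<in>INC l. lastv p = w})" by auto
  also have "card \<dots> = (\<Sum>w\<le>d. Tc l w)" unfolding Tc_def
    by (rule card_UN_disjoint) (auto simp: INC_fin)
  finally show ?thesis .
qed

lemma T_zero: assumes "1 \<le> l" "l \<le> d" shows "Tc l d = 0"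
proof -
  have e: "{p\<in>INC l. lastv p = d} = {}"
  proof (rule ccontr)
    assume "{p\<in>INC l. lastv p = d} \<noteq> {}"
    then obtain p where p: "p \<in> INC l" "lastv p = d" by auto
    have h: "length p = l" "inv_seq p" using p(1) unfolding INC_def by auto
    then have "p \<noteq> []" using assms by auto
    then show False using lastv_lt[OF h(2)] h(1) p(2) assms by simp
  qed
  show ?thesis unfolding Tc_def e by simp
qed

lemma T00: "Tc 0 0 = 1" unfolding Tc_def INC0 by (simp add: lastv_def)

lemma A_T: "card (INC n) = (\<Sum>d\<le>n. Tc n d)"
proof -
  have "INC n = (\<Union>w\<in>{..n}. {p\<in>INC n. lastv p = w})" using INC_lastv by auto
  then have "card (INC n) = card (\<Union>w\<in>{..n}. {p\<in>INC n. lastv p = w})" by simp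
  also have "\<dots> = (\<Sum>d\<le>n. Tc n d)" unfolding Tc_def
    by (rule card_UN_disjoint) (auto simp: INC_fin)
  finally show ?thesis .
qed




notation fps_nth (infixl "\<diamondsuit>" 75)

fun cat :: "nat \<Rightarrow> real" where
  "cat 0 = 1"
| "cat (Suc n) = (\<Sum>i\<le>n. cat i * cat (n - i))"

definition Cf :: "real fps" where "Cf = Abs_fps cat"

lemma Cf_eq: "Cf = 1 + fps_X * Cf^2"
proof (rule fps_ext)
  fix n show "Cf \<diamondsuit> n = (1 + fps_X * Cf^2) \<diamondsuit> n"
  proof (cases n)
    case 0 then show ?thesis by (simp add: Cf_def)
  next
    case (Suc m)
    have "(1 + fps_X * Cf^2) \<diamondsuit> n = (Cf * Cf) \<diamondsuit> m" using Suc by (simp add: power2_eq_square)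
    also have "\<dots> = (\<Sum>i=0..m. cat i * cat (m - i))" by (simp add: fps_mult_nth Cf_def)
    also have "\<dots> = cat n" using Suc by (simp add: atLeast0AtMost)
    finally show ?thesis by (simp add: Cf_def)
  qed
qed

lemma Cf0: "Cf \<diamondsuit> 0 = 1" by (simp add: Cf_def)

definition Y :: "real fps" where "Y = fps_X * Cf"

lemma Y_eq: "Y = fps_X + Y^2"
  unfolding Y_def using Cf_eq by algebra

lemma Y_pow: "Y^h = fps_X^h * Cf^h" unfolding Y_def by (simp add: power_mult_distrib)

lemma Y_diag: "(Y^h) \<diamondsuit> h = 1"
  unfolding Y_pow fps_X_power_mult_nth by (simp add: fps_power_zeroth Cf0)

lemma Y_rec: "Y^(Suc h) = fps_X * Y^h + Y^(Suc (Suc h))"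
proof -
  have "Y^(Suc h) = Y^h * Y" by simp
  also have "\<dots> = Y^h * (fps_X + Y^2)" using Y_eq by simp
  finally show ?thesis by (simp add: algebra_simps power2_eq_square)
qed

lemma FL: "d \<le> l \<Longrightarrow> (Y^(Suc l - d)) \<diamondsuit> Suc l = (\<Sum>w\<le>d. (Y^(l-w)) \<diamondsuit> l)"
proof (induction d)
  case 0
  have "(Y^(Suc l)) \<diamondsuit> Suc l = 1" "(Y^l) \<diamondsuit> l = 1" by (rule Y_diag)+
  then show ?case by simp
next
  case (Suc d)
  define m where "m = l - Suc d"
  have lm: "Suc l - Suc d = Suc m" "Suc (Suc m) = Suc l - d" "l - Suc d = m"
    using Suc.prems unfolding m_def by auto
  have "(Y^(Suc l - Suc d)) \<diamondsuit> Suc l = (fps_X * Y^m) \<diamondsuit> Suc l + (Y^(Suc (Suc m))) \<diamondsuit> Suc l"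
    unfolding lm(1) by (subst Y_rec) simp
  also have "\<dots> = (Y^m) \<diamondsuit> l + (Y^(Suc l - d)) \<diamondsuit> Suc l" unfolding lm(2) by simp
  also have "\<dots> = (Y^(l - Suc d)) \<diamondsuit> l + (\<Sum>w\<le>d. (Y^(l-w)) \<diamondsuit> l)"
    using Suc.IH Suc.prems lm(3) by simp
  finally show ?case by simp
qed

lemma TK: "d \<le> l \<Longrightarrow> real (Tc l d) = (Y^(l-d)) \<diamondsuit> l"
proof (induction l arbitrary: d)
  case 0 then show ?case by (simp add: T00)
next
  case (Suc l)
  show ?case
  proof (cases "d = Suc l")
    case True then show ?thesis by (simp add: T_zero)
  next
    case False
    then have d: "d \<le> l" using Suc.prems by simp
    have "real (Tc (Suc l) d) = (\<Sum>w\<le>d. real (Tc l w))" by (simp add: T_rec[OF d])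
    also have "\<dots> = (\<Sum>w\<le>d. (Y^(l-w)) \<diamondsuit> l)" by (rule sum.cong) (use d Suc.IH in auto)
    also have "\<dots> = (Y^(Suc l - d)) \<diamondsuit> Suc l" by (rule FL[OF d, symmetric])
    finally show ?thesis .
  qed
qed

lemma geo: "(\<Sum>h\<le>N. Y^h) * (1 - Y) = 1 - Y^(Suc N)"
proof (induction N)
  case 0 then show ?case by simp
next
  case (Suc N)
  have "(\<Sum>h\<le>Suc N. Y^h) * (1 - Y) = (\<Sum>h\<le>N. Y^h) * (1 - Y) + Y^(Suc N) * (1 - Y)"
    by (simp only: sum.atMost_Suc distrib_right)
  also have "\<dots> = 1 - Y^(Suc N) + Y^(Suc N) * (1 - Y)" using Suc.IH by simp
  also have "\<dots> = 1 - Y^(Suc N) * Y" by (simp add: algebra_simps)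
  also have "Y^(Suc N) * Y = Y^(Suc (Suc N))" by (simp only: power_Suc2)
  finally show ?case .
qed

lemma Cf_Y: "Cf * (1 - Y) = 1"
  unfolding Y_def using Cf_eq by algebra

lemma sumY: "(\<Sum>h\<le>N. Y^h) = Cf - fps_X^(Suc N) * (Cf * Cf^(Suc N))"
proof -
  have "(\<Sum>h\<le>N. Y^h) = (\<Sum>h\<le>N. Y^h) * (Cf * (1 - Y))" using Cf_Y by simp
  also have "\<dots> = Cf * ((\<Sum>h\<le>N. Y^h) * (1 - Y))" by (simp add: algebra_simps)
  also have "\<dots> = Cf - Cf * Y^(Suc N)" unfolding geo by (simp add: right_diff_distrib)
  finally show ?thesis unfolding Y_pow by (simp add: algebra_simps)
qed

lemma A_Cf: "real (card (INC n)) = Cf \<diamondsuit> n"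
proof -
  have "real (card (INC n)) = (\<Sum>d\<le>n. real (Tc n d))" by (simp add: A_T)
  also have "\<dots> = (\<Sum>d\<le>n. (Y^(n-d)) \<diamondsuit> n)" by (rule sum.cong) (auto simp: TK)
  also have "\<dots> = (\<Sum>h\<le>n. (Y^h) \<diamondsuit> n)"
    unfolding atMost_atLeast0 by (subst sum.atLeastAtMost_rev) simp
  also have "\<dots> = (\<Sum>h\<le>n. Y^h) \<diamondsuit> n" by (simp add: fps_sum_nth)
  also have "\<dots> = Cf \<diamondsuit> n" unfolding sumY fps_sub_nth fps_X_power_mult_nth by simp
  finally show ?thesis .
qed






definition Ef :: "real fps" where "Ef = Abs_fps (\<lambda>n. real (\<Sum>p\<in>INC n. ecount p))"
definition Bf :: "real fps" where "Bf = Abs_fps (\<lambda>n. real (card (Bs n)))"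
definition Ifps :: "real fps" where "Ifps = Abs_fps (\<lambda>n. real (I_count n))"

lemma two_nth[simp]: "((2::real fps) * f) \<diamondsuit> n = 2 * (f \<diamondsuit> n)"
  by (simp only: mult_2 fps_add_nth)

lemma E0: "(\<Sum>p\<in>INC 0. ecount p) = 0" by (simp add: INC0 ecount_nil)
lemma A0: "card (INC 0) = 1" by (simp add: INC0)
lemma Cf1: "Cf \<diamondsuit> Suc 0 = 1" by (simp add: Cf_def)

lemma h3: "fps_X * (Ef + Cf + Cf) = fps_X^2 * Ef + Cf - 1 + fps_X"
proof (rule fps_ext)
  fix k show "(fps_X * (Ef + Cf + Cf)) \<diamondsuit> k = (fps_X^2 * Ef + Cf - 1 + fps_X) \<diamondsuit> k"
  proof (cases k)
    case 0 then show ?thesis by (simp add: Cf0 fps_X_power_mult_nth)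
  next
    case (Suc j)
    show ?thesis
    proof (cases j)
      case 0 then show ?thesis using Suc by (simp add: Cf0 Cf1 fps_X_power_mult_nth Ef_def INC0 ecount_nil)
    next
      case (Suc m)
      have r: "real (\<Sum>p\<in>INC (Suc m). ecount p) + 2 * real (card (INC (Suc m))) =
        real (\<Sum>p\<in>INC m. ecount p) + real (card (INC (Suc (Suc m))))"
        using E_rec[of m] by (metis of_nat_add of_nat_mult of_nat_numeral)
      show ?thesis using \<open>k = Suc j\<close> Suc r by (simp add: fps_X_power_mult_nth Ef_def A_Cf)
    qed
  qed
qed

lemma h4: "Bf = fps_X * (Bf + Bf + Ef)"
proof (rule fps_ext)
  fix k show "Bf \<diamondsuit> k = (fps_X * (Bf + Bf + Ef)) \<diamondsuit> k"
  proof (cases k)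
    case 0 then show ?thesis by (simp add: Bf_def Bs0)
  next
    case (Suc m)
    have "real (card (Bs (Suc m))) = real (\<Sum>p\<in>INC m. ecount p) + 2 * real (card (Bs m))"
      using B_rec[of m] by simp
    then show ?thesis using Suc by (simp add: Bf_def Ef_def)
  qed
qed

lemma h5: "Ifps = 1 + fps_X * Ifps + fps_X * Bf + fps_X^2 * fps_deriv Cf"
proof (rule fps_ext)
  fix k show "Ifps \<diamondsuit> k = (1 + fps_X * Ifps + fps_X * Bf + fps_X^2 * fps_deriv Cf) \<diamondsuit> k"
  proof (cases k)
    case 0 then show ?thesis by (simp add: Ifps_def I_count_AVs AVs0 fps_X_power_mult_nth)
  next
    case (Suc m)
    have I1: "real (I_count (Suc m)) = real (Suc m) * real (card (INC m)) + real (card (NS m)) + real (card (Bs m))"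
      unfolding I_count_AVs using I_rec[of m] by (simp add: algebra_simps)
    have I0: "real (I_count m) = real (card (INC m)) + real (card (NS m))"
      unfolding I_count_AVs using AVs_card[of m] by simp
    have d: "(fps_X^2 * fps_deriv Cf) \<diamondsuit> Suc m = real m * Cf \<diamondsuit> m"
      by (cases m) (simp_all add: fps_X_power_mult_nth)
    show ?thesis using Suc I1 I0 d by (simp add: Ifps_def Bf_def A_Cf algebra_simps)
  qed
qed

lemma h2: "fps_deriv Cf = Cf^2 + fps_X * (2 * Cf * fps_deriv Cf)"
proof -
  have "fps_deriv Cf = fps_deriv (1 + fps_X * Cf^2)" by (rule arg_cong[OF Cf_eq])
  then show ?thesis by (simp add: fps_deriv_power' algebra_simps)
qed

theorem mainTheorem4:
  "\<exists>S :: real fps. fps_nth S 0 = 1 \<and> S ^ 2 = 1 - 4 * fps_X \<and>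
     Abs_fps (\<lambda>n. real (I_count n)) =
       (2 - 15 * fps_X + 32 * fps_X ^ 2 - 16 * fps_X ^ 3
          + fps_X * (1 - 2 * fps_X) * (1 + 2 * fps_X) * S)
       / (2 * (1 - fps_X) ^ 2 * (1 - 2 * fps_X) * (1 - 4 * fps_X))"
proof (intro exI conjI)
  let ?S = "1 - 2 * fps_X * Cf"
  let ?N = "2 - 15 * fps_X + 32 * fps_X ^ 2 - 16 * fps_X ^ 3 + fps_X * (1 - 2 * fps_X) * (1 + 2 * fps_X) * ?S"
  let ?D = "2 * (1 - fps_X) ^ 2 * (1 - 2 * fps_X) * (1 - 4 * (fps_X :: real fps))"
  show "fps_nth ?S 0 = 1" by simp
  show "?S ^ 2 = 1 - 4 * fps_X" using Cf_eq by algebra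
  have "fps_X * (?D * Ifps) = fps_X * ?N"
    using Cf_eq h2 h3 h4 h5 by algebra
  then have DI: "?D * Ifps = ?N" by (simp only: mult_left_cancel[OF fps_X_neq_zero])
  have D0: "?D \<diamondsuit> 0 \<noteq> 0" by simp
  have "?N / ?D = ?N * inverse ?D" by (rule fps_divide_unit[OF D0])
  also have "\<dots> = Ifps * (?D * inverse ?D)" unfolding DI[symmetric] by (simp add: algebra_simps)
  also have "\<dots> = Ifps" using inverse_mult_eq_1'[OF D0] by simp
  finally show "Abs_fps (\<lambda>n. real (I_count n)) = ?N / ?D" unfolding Ifps_def by simp
qed


end
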